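(* Fix $\rho>1$ and $q\in(0,1)$. For $x,y\in[0,\infty)$ define $$x\oplus_q y=\sup_{p\in[0,1]\cap\mathbb{Q}}\rho^{-\mathrm{KL}(p;q)}x^py^{1-p},\qquad \mathrm{KL}(p;q)=p\log\frac{p}{q}+(1-p)\log\frac{1-p}{1-q}.$$ Then $x\oplus_q y=y\oplus_{1-q}x$ for all $x,y\in[0,\infty)$, and the operation $\oplus_q$ is commutative on $[0,\infty)$ (i.e. $x\oplus_q y=y\oplus_q x$ for all $x,y\ge0$) if and only if $q=1/2$.
   Context: $\log$ is the natural logarithm, $0\log 0:=0$, $0^0:=1$. $\mathrm{KL}(p;q)$ is the Kullback–Leibler divergence of the binary distributions $(p,1-p)$ and $(q,1-q)$. *)

theory Defs
  imports Complex_Main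
begin

definition KL :: "real \<Rightarrow> real \<Rightarrow> real" where
  "KL p q = (if p = 0 then 0 else p * ln (p / q))
          + (if 1 - p = 0 then 0 else (1 - p) * ln ((1 - p) / (1 - q)))"

text \<open>Real power with the convention 0^0 = 1 (HOL's powr has 0 powr 0 = 0).\<close>
definition rpow :: "real \<Rightarrow> real \<Rightarrow> real" where
  "rpow x p = (if p = 0 then 1 else x powr p)"

definition oplus :: "real \<Rightarrow> real \<Rightarrow> real \<Rightarrow> real \<Rightarrow> real" where
  "oplus \<rho> q x y =
     (SUP p \<in> {p. p \<in> \<rat> \<and> 0 \<le> p \<and> p \<le> 1}.
        \<rho> powr (- KL p q) * rpow x p * rpow y (1 - p))"

end

theory Submission
  imports Defs
begin

lemma KL_swap: "KL (1 - p) (1 - q) = KL p q"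
  unfolding KL_def by (simp add: add.commute)

lemma part1:
  "oplus \<rho> q x y = oplus \<rho> (1 - q) y x"
proof -
  let ?S = "{p::real. p \<in> \<rat> \<and> 0 \<le> p \<and> p \<le> 1}"
  have S: "(\<lambda>p. 1 - p) ` ?S = ?S"
  proof (rule set_eqI, rule iffI)
    fix p assume "p \<in> (\<lambda>p. 1 - p) ` ?S" then show "p \<in> ?S" by auto
  next
    fix p assume h: "p \<in> ?S"
    then have "1 - p \<in> ?S" by auto
    then show "p \<in> (\<lambda>p. 1 - p) ` ?S" by (rule rev_image_eqI) simp
  qed
  have "oplus \<rho> (1 - q) y x = (SUP p \<in> (\<lambda>p. 1 - p) ` ?S.
        \<rho> powr (- KL p (1 - q)) * rpow y p * rpow x (1 - p))"
    unfolding oplus_def S ..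
  also have "\<dots> = (SUP p \<in> ?S. \<rho> powr (- KL (1 - p) (1 - q)) * rpow y (1 - p) * rpow x (1 - (1 - p)))"
    by (simp add: image_image)
  also have "\<dots> = oplus \<rho> q x y"
    unfolding oplus_def KL_swap by (simp add: mult.commute mult.left_commute)
  finally show ?thesis by simp
qed

lemma val10:
  assumes "\<rho> > 1" "0 < q" "q < 1"
  shows "oplus \<rho> q 1 0 = \<rho> powr ln q"
proof -
  let ?S = "{p::real. p \<in> \<rat> \<and> 0 \<le> p \<and> p \<le> 1}"
  let ?c = "\<rho> powr ln q"
  have f: "\<rho> powr (- KL p q) * rpow 1 p * rpow 0 (1 - p) = (if p = 1 then ?c else 0)" for p
  proof (cases "p = 1")
    case True
    then show ?thesis using assms by (simp add: KL_def rpow_def ln_div)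
  next
    case False
    then show ?thesis by (simp add: rpow_def)
  qed
  have "(\<lambda>p. if p = 1 then ?c else 0) ` ?S = {?c, 0}"
  proof (rule set_eqI, rule iffI)
    fix z assume "z \<in> (\<lambda>p. if p = 1 then ?c else 0) ` ?S" then show "z \<in> {?c, 0}" by auto
  next
    fix z assume "z \<in> {?c, 0}"
    moreover have "(1::real) \<in> ?S" "(0::real) \<in> ?S" by auto
    ultimately show "z \<in> (\<lambda>p. if p = 1 then ?c else 0) ` ?S"
    proof (elim insertE)
      assume "z = ?c" "(1::real) \<in> ?S" then show ?thesis by (intro image_eqI[of _ _ 1]) auto
    next
      assume "z = 0" "(0::real) \<in> ?S" then show ?thesis by (intro image_eqI[of _ _ 0]) auto
    qed simp
  qed
  then have "oplus \<rho> q 1 0 = Sup {?c, 0}" unfolding oplus_def f by simp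
  also have "\<dots> = ?c" using assms by (intro cSup_eq_maximum) auto
  finally show ?thesis .
qed

theorem proposition8p3:
  fixes \<rho> q :: real
  assumes "\<rho> > 1" and "0 < q" and "q < 1"
  shows "(\<forall>x y. x \<ge> 0 \<longrightarrow> y \<ge> 0 \<longrightarrow> oplus \<rho> q x y = oplus \<rho> (1 - q) y x)
       \<and> ((\<forall>x y. x \<ge> 0 \<longrightarrow> y \<ge> 0 \<longrightarrow> oplus \<rho> q x y = oplus \<rho> q y x) \<longleftrightarrow> q = 1/2)"
proof (intro conjI allI impI iffI)
  fix x y show "oplus \<rho> q x y = oplus \<rho> (1 - q) y x" by (rule part1)
next
  fix x y :: real assume "q = 1/2"
  then show "oplus \<rho> q x y = oplus \<rho> q y x" using part1[of \<rho> q x y] by (simp add: \<open>q = 1/2\<close>)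
next
  assume h: "\<forall>x y. x \<ge> 0 \<longrightarrow> y \<ge> 0 \<longrightarrow> oplus \<rho> q x y = oplus \<rho> q y x"
  have "oplus \<rho> q 1 0 = oplus \<rho> q 0 1" using h by simp
  also have "oplus \<rho> q 0 1 = oplus \<rho> (1 - q) 1 0" by (rule part1)
  finally have "\<rho> powr ln q = \<rho> powr ln (1 - q)"
    using val10[OF assms] val10[of \<rho> "1 - q"] assms by simp
  then have "ln q = ln (1 - q)" using assms by (simp add: powr_inj)
  then have "q = 1 - q" using assms by simp
  then show "q = 1/2" by simp
qed

end
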